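(* Fix $\theta>0$. As $N\to\infty$: - $\kappa_N(\theta)/N\to e^{-1/\theta}$; - the optimal winning probability $W(N,\kappa_N(\theta))/[N]_\theta\to 1/e$. In particular, the limit of the optimal winning probability does not depend on $\theta$.
   Context: Permutations of $\{1,\dots,N\}$ are written in one-line notation; $\mathfrak S_N$ is the set of all of them. An entry $\pi_j$ is a left-to-right maximum if $\pi_j>\pi_i$ for all $i<j$; $\mathrm{lrm}(\pi)$ is the number of left-to-right maxima. Definitions: - $[m]_\theta=\theta(\theta+1)\cdots(\theta+m-1)$; this equals $\sum_{\pi\in\mathfrak S_m}\theta^{\mathrm{lrm}(\pi)}$. - For $0\le k\le N-1$, $\pi$ is $k$-winnable if the first index $j>k$ with $\pi_j$ a left-to-right maximum has $\pi_j=N$. - $W(N,k)=\sum_{k\text{-winnable }\pi\in\mathfrak S_N}\theta^{\mathrm{lrm}(\pi)}$. - With $H_N(k)=\sum_{i=k+1}^{N-1}1/i$ for $0\le k\le N-1$, set $\kappa_N(\theta)=0$ if $\theta\le H_N(0)^{-1}$; $\kappa_N(\theta)=k$ if $H_N(k-1)^{-1}<\theta\le H_N(k)^{-1}$ for some $1\le k\le N-2$; and $\kappa_N(\theta)=N-1$ if $\theta>N-1$. $\kappa_N(\theta)$ is the number of initial rejections of an optimal strategy in the best choice game where $\pi\in\mathfrak S_N$ has probability $\theta^{\mathrm{lrm}(\pi)}/[N]_\theta$, and $W(N,\kappa_N(\theta))/[N]_\theta$ is the optimal winning probability. *)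

theory Defs
  imports Complex_Main "HOL-Combinatorics.Permutations"
begin

text \<open>Permutations of {1..N} are functions p with p permutes {1..N};
  the one-line notation is pi_j = p j for j in {1..N}.\<close>

definition is_lrm :: "(nat \<Rightarrow> nat) \<Rightarrow> nat \<Rightarrow> bool" where
  "is_lrm p j \<longleftrightarrow> (\<forall>i\<in>{1..<j}. p i < p j)"

definition lrm :: "nat \<Rightarrow> (nat \<Rightarrow> nat) \<Rightarrow> nat" where
  "lrm N p = card {j\<in>{1..N}. is_lrm p j}"

definition rising :: "real \<Rightarrow> nat \<Rightarrow> real" where
  "rising \<theta> m = pochhammer \<theta> m"

definition winnable :: "nat \<Rightarrow> nat \<Rightarrow> (nat \<Rightarrow> nat) \<Rightarrow> bool" where
  "winnable N k p \<longleftrightarrow>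
     (\<exists>j. k < j \<and> j \<le> N \<and> is_lrm p j \<and> (\<forall>i. k < i \<and> i < j \<longrightarrow> \<not> is_lrm p i) \<and> p j = N)"

definition W :: "nat \<Rightarrow> nat \<Rightarrow> real \<Rightarrow> real" where
  "W N k \<theta> = (\<Sum>p\<in>{p. p permutes {1..N} \<and> winnable N k p}. \<theta> ^ lrm N p)"

definition H :: "nat \<Rightarrow> nat \<Rightarrow> real" where
  "H N k = (\<Sum>i\<in>{k+1..N-1}. 1 / real i)"

definition kappa :: "nat \<Rightarrow> real \<Rightarrow> nat" where
  "kappa N \<theta> =
     (if \<theta> \<le> inverse (H N 0) then 0
      else if \<theta> > real N - 1 then N - 1
      else (THE k. 1 \<le> k \<and> k \<le> N - 2 \<and> inverse (H N (k - 1)) < \<theta> \<and> \<theta> \<le> inverse (H N k)))"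

end

theory Submission
  imports Defs
begin


definition shiftv :: "nat \<Rightarrow> nat \<Rightarrow> nat" where "shiftv v y = (if v \<le> y then Suc y else y)"
definition unshiftv :: "nat \<Rightarrow> nat \<Rightarrow> nat" where "unshiftv v y = (if v < y then y - 1 else y)"
definition insp :: "nat \<Rightarrow> (nat \<Rightarrow> nat) \<Rightarrow> nat \<Rightarrow> nat \<Rightarrow> nat" where
  "insp N q v = (\<lambda>j. if j \<in> {1..N} then shiftv v (q j) else if j = Suc N then v else j)"
definition delp :: "nat \<Rightarrow> (nat \<Rightarrow> nat) \<Rightarrow> (nat \<Rightarrow> nat) \<times> nat" where
  "delp N p = ((\<lambda>j. if j \<in> {1..N} then unshiftv (p (Suc N)) (p j) else j), p (Suc N))"

lemma insp_permutes:
  assumes q: "q permutes {1..N}" and v: "v \<in> {1..Suc N}"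
  shows "insp N q v permutes {1..Suc N}"
proof (rule bij_imp_permutes)
  have qin: "j \<in> {1..N} \<Longrightarrow> q j \<in> {1..N}" for j using permutes_in_image[OF q] by auto
  have inj: "inj_on (insp N q v) {1..Suc N}"
  proof (rule inj_onI)
    fix x y assume x: "x \<in> {1..Suc N}" and y: "y \<in> {1..Suc N}" and e: "insp N q v x = insp N q v y"
    show "x = y"
    proof (cases "x = Suc N")
      case True
      then show ?thesis using e y qin[of y] by (auto simp: insp_def shiftv_def split: if_splits)
    next
      case False
      then have x': "x \<in> {1..N}" using x by auto
      show ?thesis
      proof (cases "y = Suc N")
        case True then show ?thesis using e x' qin[of x] by (auto simp: insp_def shiftv_def split: if_splits)
      next
        case False
        then have y': "y \<in> {1..N}" using y by auto
        have "q x = q y" using e x' y' by (auto simp: insp_def shiftv_def split: if_splits)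
        then show ?thesis using permutes_inj[OF q] by (auto dest: injD)
      qed
    qed
  qed
  have sub: "insp N q v ` {1..Suc N} \<subseteq> {1..Suc N}"
    using qin v by (auto simp: insp_def shiftv_def)
  show "bij_betw (insp N q v) {1..Suc N} {1..Suc N}"
    using endo_inj_surj[OF _ sub inj] inj by (simp add: bij_betw_def)
  show "x \<notin> {1..Suc N} \<Longrightarrow> insp N q v x = x" for x by (auto simp: insp_def)
qed

lemma delp_permutes:
  assumes p: "p permutes {1..Suc N}"
  shows "fst (delp N p) permutes {1..N}" "snd (delp N p) \<in> {1..Suc N}"
proof -
  have pin: "j \<in> {1..Suc N} \<Longrightarrow> p j \<in> {1..Suc N}" for j using permutes_in_image[OF p] by auto
  have pinj: "p x = p y \<Longrightarrow> x = y" for x y using permutes_inj[OF p] by (auto dest: injD)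
  show "snd (delp N p) \<in> {1..Suc N}" using pin[of "Suc N"] by (simp add: delp_def)
  let ?f = "fst (delp N p)"
  have inj: "inj_on ?f {1..N}"
  proof (rule inj_onI)
    fix x y assume x: "x \<in> {1..N}" and y: "y \<in> {1..N}" and e: "?f x = ?f y"
    have "p x \<noteq> p (Suc N)" "p y \<noteq> p (Suc N)" using x y pinj by fastforce+
    then have "p x = p y" using e x y by (auto simp: delp_def unshiftv_def split: if_splits)
    then show "x = y" by (rule pinj)
  qed
  have sub: "?f ` {1..N} \<subseteq> {1..N}"
  proof
    fix y assume "y \<in> ?f ` {1..N}"
    then obtain x where x: "x \<in> {1..N}" and y: "y = ?f x" by auto
    have "p x \<noteq> p (Suc N)" using x pinj by fastforce
    moreover have "p x \<in> {1..Suc N}" "p (Suc N) \<in> {1..Suc N}" using x pin by auto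
    ultimately show "y \<in> {1..N}" using x y by (auto simp: delp_def unshiftv_def)
  qed
  show "?f permutes {1..N}"
  proof (rule bij_imp_permutes)
    show "bij_betw ?f {1..N} {1..N}"
      using endo_inj_surj[OF _ sub inj] inj by (simp add: bij_betw_def)
    show "x \<notin> {1..N} \<Longrightarrow> ?f x = x" for x by (auto simp: delp_def)
  qed
qed

lemma lrm_insp_low:
  assumes "j \<in> {1..N}"
  shows "is_lrm (insp N q v) j \<longleftrightarrow> is_lrm q j"
proof -
  have "\<And>i. i \<in> {1..<j} \<Longrightarrow> (insp N q v i < insp N q v j \<longleftrightarrow> q i < q j)"
    using assms by (auto simp: insp_def shiftv_def)
  then show ?thesis unfolding is_lrm_def by auto
qed

lemma lrm_insp_top:
  assumes q: "q permutes {1..N}" and v: "v \<in> {1..Suc N}"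
  shows "is_lrm (insp N q v) (Suc N) \<longleftrightarrow> v = Suc N"
proof
  assume "v = Suc N"
  moreover have "\<And>i. i \<in> {1..N} \<Longrightarrow> q i \<in> {1..N}" using permutes_in_image[OF q] by auto
  ultimately show "is_lrm (insp N q v) (Suc N)"
    unfolding is_lrm_def insp_def shiftv_def by fastforce
next
  assume l: "is_lrm (insp N q v) (Suc N)"
  show "v = Suc N"
  proof (rule ccontr)
    assume "v \<noteq> Suc N"
    then have "v \<in> {1..N}" using v by auto
    then obtain i where i: "i \<in> {1..N}" "q i = v"
      using permutes_in_image[OF q] permutes_surj[OF q] by (metis surjD)
    have "insp N q v i = Suc v" using i by (auto simp: insp_def shiftv_def)
    moreover have "insp N q v (Suc N) = v" by (simp add: insp_def)
    moreover have "i \<in> {1..<Suc N}" using i by auto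
    ultimately show False using l unfolding is_lrm_def by fastforce
  qed
qed

lemma factor_sum:
  fixes a b :: "nat \<Rightarrow> real"
  shows "(\<Sum>p\<in>{p. p permutes {1..N}}. \<Prod>j\<in>{1..N}. if is_lrm p j then a j else b j)
       = (\<Prod>j\<in>{1..N}. a j + real (j - 1) * b j)"
proof (induction N)
  case 0
  then show ?case by simp
next
  case (Suc N)
  let ?g = "\<lambda>p. \<Prod>j\<in>{1..Suc N}. if is_lrm p j then a j else b j"
  let ?gl = "\<lambda>p. \<Prod>j\<in>{1..N}. if is_lrm p j then a j else b j"
  let ?h = "\<lambda>(q,v). ?g (insp N q v)"
  have "sum ?g {p. p permutes {1..Suc N}} = sum ?h ({q. q permutes {1..N}} \<times> {1..Suc N})"
  proof (rule sum.reindex_bij_witness[where i="\<lambda>(q,v). insp N q v" and j="delp N"])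
    fix p assume "p \<in> {p. p permutes {1..Suc N}}"
    then have p: "p permutes {1..Suc N}" by simp
    have pin: "j \<in> {1..Suc N} \<Longrightarrow> p j \<in> {1..Suc N}" for j using permutes_in_image[OF p] by auto
    have pinj: "p x = p y \<Longrightarrow> x = y" for x y using permutes_inj[OF p] by (auto dest: injD)
    show "delp N p \<in> {q. q permutes {1..N}} \<times> {1..Suc N}"
      using delp_permutes[OF p] by (cases "delp N p") auto
    show "(case delp N p of (q, v) \<Rightarrow> insp N q v) = p"
    proof
      fix j
      show "(case delp N p of (q, v) \<Rightarrow> insp N q v) j = p j"
      proof (cases "j \<in> {1..N}")
        case True
        then have "p j \<noteq> p (Suc N)" using pinj by fastforce
        then show ?thesis using True by (auto simp: delp_def insp_def shiftv_def unshiftv_def)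
      next
        case False
        then show ?thesis using permutes_not_in[OF p, of j] by (auto simp: delp_def insp_def)
      qed
    qed
    show "?h (delp N p) = ?g p"
      using \<open>(case delp N p of (q, v) \<Rightarrow> insp N q v) = p\<close> by (cases "delp N p") auto
  next
    fix qv assume "qv \<in> {q. q permutes {1..N}} \<times> {1..Suc N}"
    then obtain q v where qv: "qv = (q,v)" and q: "q permutes {1..N}" and v: "v \<in> {1..Suc N}" by auto
    show "(case qv of (q, v) \<Rightarrow> insp N q v) \<in> {p. p permutes {1..Suc N}}"
      using insp_permutes[OF q v] qv by simp
    show "delp N (case qv of (q, v) \<Rightarrow> insp N q v) = qv"
      using permutes_not_in[OF q] qv by (auto simp: delp_def insp_def shiftv_def unshiftv_def fun_eq_iff)
  qed
  also have "\<dots> = (\<Sum>q\<in>{q. q permutes {1..N}}. \<Sum>v\<in>{1..Suc N}. ?gl q * (if v = Suc N then a (Suc N) else b (Suc N)))"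
  proof -
    have "(\<Prod>j\<in>{1..Suc N}. if is_lrm (insp N q v) j then a j else b j) = ?gl q * (if v = Suc N then a (Suc N) else b (Suc N))"
      if q: "q permutes {1..N}" and v: "v \<in> {1..Suc N}" for q v
    proof -
      have "(\<Prod>j\<in>{1..Suc N}. if is_lrm (insp N q v) j then a j else b j) = (\<Prod>j\<in>{1..N}. if is_lrm (insp N q v) j then a j else b j) * (if is_lrm (insp N q v) (Suc N) then a (Suc N) else b (Suc N))"
        by (simp add: prod.cl_ivl_Suc)
      also have "(\<Prod>j\<in>{1..N}. if is_lrm (insp N q v) j then a j else b j) = ?gl q"
        by (rule prod.cong) (auto simp: lrm_insp_low)
      finally show ?thesis using lrm_insp_top[OF q v] by simp
    qed
    note eq = this
    show ?thesis
      unfolding sum.cartesian_product[symmetric]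
    proof (rule sum.cong[OF refl])
      fix q assume q: "q \<in> {q. q permutes {1..N}}"
      show "(\<Sum>v\<in>{1..Suc N}. (\<Prod>j\<in>{1..Suc N}. if is_lrm (insp N q v) j then a j else b j)) = (\<Sum>v\<in>{1..Suc N}. ?gl q * (if v = Suc N then a (Suc N) else b (Suc N)))"
      proof (rule sum.cong[OF refl])
        fix v assume v: "v \<in> {1..Suc N}"
        show "(\<Prod>j\<in>{1..Suc N}. if is_lrm (insp N q v) j then a j else b j) = ?gl q * (if v = Suc N then a (Suc N) else b (Suc N))"
          using eq[of q v] q v by simp
      qed
    qed
  qed
  also have "\<dots> = (\<Sum>q\<in>{q. q permutes {1..N}}. ?gl q * (a (Suc N) + real N * b (Suc N)))"
  proof (rule sum.cong)
    fix q
    have "(\<Sum>v\<in>{1..Suc N}. (if v = Suc N then a (Suc N) else b (Suc N))) = a (Suc N) + real N * b (Suc N)"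
    proof -
      have "{1..Suc N} = insert (Suc N) {1..N}" by auto
      then show ?thesis by simp
    qed
    then show "(\<Sum>v\<in>{1..Suc N}. ?gl q * (if v = Suc N then a (Suc N) else b (Suc N))) = ?gl q * (a (Suc N) + real N * b (Suc N))"
      by (simp add: sum_distrib_left[symmetric])
  qed simp
  also have "\<dots> = (\<Prod>j\<in>{1..Suc N}. a j + real (j - 1) * b j)"
    using Suc.IH by (simp add: sum_distrib_right[symmetric])
  finally show ?case .
qed



lemma lrm_prod: "\<theta> ^ lrm N p = (\<Prod>j\<in>{1..N}. if is_lrm p j then \<theta> else (1::real))"
proof -
  have "(\<Prod>j\<in>{1..N}. if is_lrm p j then \<theta> else (1::real)) = (\<Prod>j\<in>{j\<in>{1..N}. is_lrm p j}. \<theta>)"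
    by (subst prod.inter_filter[symmetric]) auto
  then show ?thesis by (simp add: lrm_def)
qed

lemma winnable_iff:
  assumes p: "p permutes {1..N}"
  shows "winnable N k p \<longleftrightarrow> (\<exists>m\<in>{k+1..N}. {j\<in>{k+1..N}. is_lrm p j} = {m})"
proof -
  have pin: "j \<in> {1..N} \<Longrightarrow> p j \<in> {1..N}" for j using permutes_in_image[OF p] by auto
  have pinj: "p x = p y \<Longrightarrow> x = y" for x y using permutes_inj[OF p] by (auto dest: injD)
  have after: "\<not> is_lrm p j" if "p m = N" "m < j" "j \<le> N" for m j
  proof -
    have "j \<in> {1..N}" using that by auto
    then have "p j \<le> N" using pin by auto
    moreover have "m \<in> {1..<j}" using that p pin permutes_not_in[OF p, of m]
      by (cases "m \<in> {1..N}") auto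
    ultimately show ?thesis using that unfolding is_lrm_def
    proof -
      assume a: "p j \<le> N" "m \<in> {1..<j}" "p m = N"
      show "\<not> (\<forall>i\<in>{1..<j}. p i < p j)"
      proof
        assume "\<forall>i\<in>{1..<j}. p i < p j"
        then have "p m < p j" using a(2) by blast
        then show False using a by simp
      qed
    qed
  qed
  have atmax: "is_lrm p m" if "p m = N" "m \<in> {1..N}" for m
    unfolding is_lrm_def
  proof
    fix i assume i: "i \<in> {1..<m}"
    then have "i \<in> {1..N}" "i \<noteq> m" using that by auto
    then have "p i \<in> {1..N}" "p i \<noteq> N" using pin pinj that by auto
    then show "p i < p m" using that by auto
  qed
  show ?thesis
  proof
    assume "winnable N k p"
    then obtain j where j: "k < j" "j \<le> N" "is_lrm p j" "\<forall>i. k < i \<and> i < j \<longrightarrow> \<not> is_lrm p i" "p j = N"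
      unfolding winnable_def by blast
    have "{j\<in>{k+1..N}. is_lrm p j} = {j}"
    proof (auto simp: j)
      fix i assume "Suc k \<le> i" "i \<le> N" "is_lrm p i"
      then show "i = j" using j after[of j i] by (cases i j rule: linorder_cases) auto
    qed (use j in auto)
    then show "\<exists>m\<in>{k+1..N}. {j\<in>{k+1..N}. is_lrm p j} = {m}" using j by auto
  next
    assume "\<exists>m\<in>{k+1..N}. {j\<in>{k+1..N}. is_lrm p j} = {m}"
    then obtain m where m: "m \<in> {k+1..N}" and S: "{j\<in>{k+1..N}. is_lrm p j} = {m}" by blast
    have "N \<in> {1..N}" using m by auto
    then obtain m0 where m0: "m0 \<in> {1..N}" "p m0 = N"
      using permutes_surj[OF p] pin permutes_not_in[OF p] by (metis surjD)
    have lm: "is_lrm p m" using S by auto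
    have "\<not> m0 < m" using after[OF m0(2), of m] lm m by auto
    moreover have "m0 \<in> {j\<in>{k+1..N}. is_lrm p j}"
      using calculation m m0 atmax by auto
    ultimately have "m0 = m" using S by auto
    show "winnable N k p" unfolding winnable_def
    proof (intro exI conjI allI impI)
      show "k < m" "m \<le> N" "is_lrm p m" "p m = N" using m lm m0 \<open>m0 = m\<close> by auto
      fix i assume "k < i \<and> i < m"
      then show "\<not> is_lrm p i" using S m by auto
    qed
  qed
qed

lemma poch_prod: "pochhammer (\<theta>::real) n = (\<Prod>j\<in>{1..n}. \<theta> + real (j - 1))"
  by (induction n) (simp_all add: pochhammer_Suc prod.cl_ivl_Suc)

lemma W_formula:
  fixes \<theta> :: real
  assumes "k \<le> N"
  shows "W N k \<theta> = \<theta> * pochhammer \<theta> k * (\<Sum>m\<in>{k+1..N}. \<Prod>j\<in>{k+1..N}-{m}. real (j - 1))"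
proof -
  define S where "S p = {j\<in>{k+1..N}. is_lrm p j}" for p :: "nat \<Rightarrow> nat"
  define A where "A m j = (if j \<le> k \<or> j = m then \<theta> else 0)" for m j :: nat
  define B where "B m j = (if j \<le> k \<or> j \<noteq> m then 1 else (0::real))" for m j :: nat
  let ?P = "{p. p permutes {1..N}}"
  have "W N k \<theta> = (\<Sum>p\<in>?P. if winnable N k p then \<theta> ^ lrm N p else 0)"
  proof -
    have "{p. p permutes {1..N} \<and> winnable N k p} = {p \<in> ?P. winnable N k p}" by auto
    then show ?thesis unfolding W_def
      using sum.inter_filter[OF finite_permutations[OF finite_atLeastAtMost[of 1 N]], of "\<lambda>p. \<theta> ^ lrm N p" "winnable N k"]
      by (simp only: mem_Collect_eq)
  qed
  also have "\<dots> = (\<Sum>p\<in>?P. \<Sum>m\<in>{k+1..N}. if S p = {m} then \<theta> ^ lrm N p else 0)"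
  proof (rule sum.cong[OF refl])
    fix p assume "p \<in> ?P"
    then have p: "p permutes {1..N}" by simp
    show "(if winnable N k p then \<theta> ^ lrm N p else 0) = (\<Sum>m\<in>{k+1..N}. if S p = {m} then \<theta> ^ lrm N p else 0)"
    proof (cases "\<exists>m\<in>{k+1..N}. S p = {m}")
      case True
      then obtain m0 where m0: "m0 \<in> {k+1..N}" "S p = {m0}" by blast
      have "(\<Sum>m\<in>{k+1..N}. if S p = {m} then \<theta> ^ lrm N p else 0) = (\<Sum>m\<in>{k+1..N}. if m0 = m then \<theta> ^ lrm N p else 0)"
        using m0 by (intro sum.cong) auto
      also have "\<dots> = \<theta> ^ lrm N p" using m0 by simp
      finally show ?thesis using winnable_iff[OF p] True S_def by simp
    next
      case False
      then show ?thesis using winnable_iff[OF p] S_def by (auto intro!: sum.neutral)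
    qed
  qed
  also have "\<dots> = (\<Sum>m\<in>{k+1..N}. \<Sum>p\<in>?P. \<Prod>j\<in>{1..N}. if is_lrm p j then A m j else B m j)"
  proof (subst sum.swap, intro sum.cong refl)
    fix m p assume m: "m \<in> {k+1..N}"
    show "(if S p = {m} then \<theta> ^ lrm N p else 0) = (\<Prod>j\<in>{1..N}. if is_lrm p j then A m j else B m j)"
    proof (cases "S p = {m}")
      case True
      have "(\<Prod>j\<in>{1..N}. if is_lrm p j then A m j else B m j) = (\<Prod>j\<in>{1..N}. if is_lrm p j then \<theta> else 1)"
      proof (rule prod.cong[OF refl])
        fix j assume j: "j \<in> {1..N}"
        show "(if is_lrm p j then A m j else B m j) = (if is_lrm p j then \<theta> else 1)"
        proof (cases "j \<le> k")
          case True
          then show ?thesis unfolding A_def B_def by simp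
        next
          case False
          then have jS: "j \<in> S p \<longleftrightarrow> is_lrm p j" using j unfolding S_def by auto
          have "j \<in> S p \<longleftrightarrow> j = m" using \<open>S p = {m}\<close> by simp
          then have "is_lrm p j \<longleftrightarrow> j = m" using jS by simp
          then show ?thesis using False unfolding A_def B_def by auto
        qed
      qed
      then show ?thesis using True lrm_prod by simp
    next
      case False
      have "\<exists>j\<in>{1..N}. (if is_lrm p j then A m j else B m j) = 0"
      proof (cases "is_lrm p m")
        case True
        then obtain j where "j \<in> S p" "j \<noteq> m" using False m unfolding S_def by auto
        then show ?thesis unfolding S_def A_def by (intro bexI[of _ j]) auto
      next
        case False
        then show ?thesis using m unfolding B_def by (intro bexI[of _ m]) auto
      qed
      then show ?thesis using False by simp
    qed
  qed
  also have "\<dots> = (\<Sum>m\<in>{k+1..N}. \<Prod>j\<in>{1..N}. A m j + real (j - 1) * B m j)"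
    by (simp only: factor_sum)
  also have "\<dots> = (\<Sum>m\<in>{k+1..N}. \<theta> * pochhammer \<theta> k * (\<Prod>j\<in>{k+1..N}-{m}. real (j - 1)))"
  proof (rule sum.cong[OF refl])
    fix m assume m: "m \<in> {k+1..N}"
    have "(\<Prod>j\<in>{1..N}. A m j + real (j - 1) * B m j)
        = (\<Prod>j\<in>{1..k}. A m j + real (j - 1) * B m j) * (\<Prod>j\<in>{k+1..N}. A m j + real (j - 1) * B m j)"
      using prod.ub_add_nat[of 1 k _ "N - k"] assms by simp
    also have "(\<Prod>j\<in>{1..k}. A m j + real (j - 1) * B m j) = pochhammer \<theta> k"
      unfolding poch_prod A_def B_def by (rule prod.cong) auto
    also have "(\<Prod>j\<in>{k+1..N}. A m j + real (j - 1) * B m j)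
        = (A m m + real (m - 1) * B m m) * (\<Prod>j\<in>{k+1..N}-{m}. A m j + real (j - 1) * B m j)"
      using m by (simp add: prod.remove)
    also have "(\<Prod>j\<in>{k+1..N}-{m}. A m j + real (j - 1) * B m j) = (\<Prod>j\<in>{k+1..N}-{m}. real (j - 1))"
      unfolding A_def B_def by (rule prod.cong) auto
    also have "A m m + real (m - 1) * B m m = \<theta>" using m unfolding A_def B_def by auto
    finally show "(\<Prod>j\<in>{1..N}. A m j + real (j - 1) * B m j) = \<theta> * pochhammer \<theta> k * (\<Prod>j\<in>{k+1..N}-{m}. real (j - 1))"
      by simp
  qed
  also have "\<dots> = \<theta> * pochhammer \<theta> k * (\<Sum>m\<in>{k+1..N}. \<Prod>j\<in>{k+1..N}-{m}. real (j - 1))"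
    by (simp add: sum_distrib_left)
  finally show ?thesis .
qed

lemma ratio_formula:
  fixes \<theta> :: real
  assumes "\<theta> > 0" "1 \<le> k" "k \<le> N"
  shows "W N k \<theta> / pochhammer \<theta> N = \<theta> * H N (k - 1) * (\<Prod>j\<in>{k+1..N}. real (j - 1) / (\<theta> + real (j - 1)))"
proof -
  let ?P = "\<Prod>j\<in>{k+1..N}. real (j - 1)"
  let ?D = "\<Prod>j\<in>{k+1..N}. \<theta> + real (j - 1)"
  have sumeq: "(\<Sum>m\<in>{k+1..N}. \<Prod>j\<in>{k+1..N}-{m}. real (j - 1)) = ?P * (\<Sum>m\<in>{k+1..N}. 1 / real (m - 1))"
    unfolding sum_distrib_left
  proof (rule sum.cong[OF refl])
    fix m assume m: "m \<in> {k+1..N}"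
    then have "real (m - 1) \<noteq> 0" using assms by auto
    then show "(\<Prod>j\<in>{k+1..N}-{m}. real (j - 1)) = ?P * (1 / real (m - 1))"
      using m by (simp add: prod.remove)
  qed
  have pN: "pochhammer \<theta> N = pochhammer \<theta> k * ?D"
    unfolding poch_prod using prod.ub_add_nat[of 1 k _ "N - k"] assms by simp
  have pk: "pochhammer \<theta> k > 0" using assms by (simp add: pochhammer_pos)
  have Hs: "H N (k - 1) = (\<Sum>m\<in>{k+1..N}. 1 / real (m - 1))"
  proof -
    have "(\<Sum>m\<in>{k+1..N}. 1 / real (m - 1)) = (\<Sum>m\<in>{k+1..(N-1)+1}. 1 / real (m - 1))"
      using assms by simp
    also have "\<dots> = (\<Sum>i\<in>{k..N-1}. 1 / real i)"
      by (subst sum.shift_bounds_cl_nat_ivl) simp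
    finally show ?thesis unfolding H_def using assms by simp
  qed
  have "W N k \<theta> / pochhammer \<theta> N = \<theta> * (\<Sum>m\<in>{k+1..N}. 1 / real (m - 1)) * (?P / ?D)"
    unfolding W_formula[OF assms(3)] sumeq pN using pk by (simp add: field_simps)
  then show ?thesis unfolding Hs by (simp add: prod_dividef)
qed



lemma harm_lb: "k \<le> n \<Longrightarrow> ln (real (n+1)) - ln (real (k+1)) \<le> (\<Sum>i\<in>{k+1..n}. 1 / real i)"
proof (induction n)
  case 0
  then show ?case by simp
next
  case (Suc n)
  show ?case
  proof (cases "k = Suc n")
    case True then show ?thesis by simp
  next
    case False
    then have kn: "k \<le> n" using Suc.prems by simp
    have "ln (real (Suc n + 1)) - ln (real (Suc n)) = ln ((real n + 2) / (real n + 1))"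
      by (simp add: ln_div add.commute)
    also have "\<dots> \<le> (real n + 2) / (real n + 1) - 1" by (rule ln_le_minus_one) simp
    also have "\<dots> = 1 / real (Suc n)" by (simp add: field_simps)
    finally have st: "ln (real (Suc n + 1)) - ln (real (Suc n)) \<le> 1 / real (Suc n)" .
    have "(\<Sum>i\<in>{k+1..Suc n}. 1 / real i) = (\<Sum>i\<in>{k+1..n}. 1 / real i) + 1 / real (Suc n)"
      using kn by (simp add: sum.cl_ivl_Suc)
    then show ?thesis using Suc.IH[OF kn] st by simp
  qed
qed

lemma harm_ub: "1 \<le> k \<Longrightarrow> k \<le> n \<Longrightarrow> (\<Sum>i\<in>{k+1..n}. 1 / real i) \<le> ln (real n) - ln (real k)"
proof (induction n)
  case 0
  then show ?case by simp
next
  case (Suc n)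
  show ?case
  proof (cases "k = Suc n")
    case True then show ?thesis by simp
  next
    case False
    then have kn: "k \<le> n" using Suc.prems by simp
    then have n1: "n \<ge> 1" using Suc.prems by simp
    have "ln (real n) - ln (real (Suc n)) = ln (real n / (real n + 1))"
      using n1 by (simp add: ln_div add.commute)
    also have "\<dots> \<le> real n / (real n + 1) - 1" by (rule ln_le_minus_one) (use n1 in simp)
    also have "\<dots> = - (1 / real (Suc n))" by (simp add: field_simps)
    finally have st: "1 / real (Suc n) \<le> ln (real (Suc n)) - ln (real n)" by simp
    have "(\<Sum>i\<in>{k+1..Suc n}. 1 / real i) = (\<Sum>i\<in>{k+1..n}. 1 / real i) + 1 / real (Suc n)"
      using kn by (simp add: sum.cl_ivl_Suc)
    then show ?thesis using Suc.IH[OF Suc.prems(1) kn] st by simp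
  qed
qed

lemma H_antimono: "k \<le> k' \<Longrightarrow> H N k' \<le> H N k"
  unfolding H_def by (rule sum_mono2) auto

lemma H_pos: "k + 2 \<le> N \<Longrightarrow> H N k > 0"
  unfolding H_def by (rule sum_pos) auto

lemma H_step: "1 \<le> k \<Longrightarrow> k + 1 \<le> N \<Longrightarrow> H N (k - 1) = 1 / real k + H N k"
proof -
  assume a: "1 \<le> k" "k + 1 \<le> N"
  have "{k - 1 + 1..N - 1} = insert k {k+1..N-1}" using a by auto
  then show ?thesis unfolding H_def by simp
qed

lemma H_last: "2 \<le> N \<Longrightarrow> H N (N - 2) = 1 / real (N - 1)"
proof -
  assume "2 \<le> N"
  then have "{N - 2 + 1..N - 1} = {N - 1}" by auto
  then show ?thesis unfolding H_def by simp
qed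

lemma kappa_props:
  fixes \<theta> :: real
  assumes th: "\<theta> > 0" and N2: "2 \<le> N" and H0: "1/\<theta> < H N 0" and tN: "\<theta> \<le> real N - 1"
  shows "1 \<le> kappa N \<theta> \<and> kappa N \<theta> \<le> N - 2 \<and> H N (kappa N \<theta>) \<le> 1/\<theta> \<and> 1/\<theta> < H N (kappa N \<theta> - 1)"
proof -
  have conv1: "inverse (H N j) < \<theta> \<longleftrightarrow> 1/\<theta> < H N j" if "j + 2 \<le> N" for j
  proof -
    have "H N j > 0" using H_pos that by simp
    then show ?thesis using th by (simp add: inverse_eq_divide field_simps)
  qed
  have conv2: "\<theta> \<le> inverse (H N j) \<longleftrightarrow> H N j \<le> 1/\<theta>" if "j + 2 \<le> N" for j
  proof -
    have "H N j > 0" using H_pos that by simp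
    then show ?thesis using th by (simp add: inverse_eq_divide field_simps)
  qed
  define P where "P k \<longleftrightarrow> 1 \<le> k \<and> k \<le> N - 2 \<and> inverse (H N (k - 1)) < \<theta> \<and> \<theta> \<le> inverse (H N k)" for k
  have Pc: "P k \<longleftrightarrow> 1 \<le> k \<and> k \<le> N - 2 \<and> 1/\<theta> < H N (k - 1) \<and> H N k \<le> 1/\<theta>" for k
    unfolding P_def using conv1[of "k - 1"] conv2[of k] N2 by auto
  have ex: "\<exists>k. P k"
  proof -
    define Q where "Q k \<longleftrightarrow> H N k \<le> 1/\<theta>" for k
    have "Q (N - 2)" unfolding Q_def H_last[OF N2] using th tN N2
      by (simp add: field_simps of_nat_diff)
    then have q: "Q (LEAST k. Q k)" by (rule LeastI)
    have le: "(LEAST k. Q k) \<le> N - 2" using \<open>Q (N - 2)\<close> by (rule Least_le)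
    have nz: "(LEAST k. Q k) \<noteq> 0"
    proof
      assume "(LEAST k. Q k) = 0"
      then have "Q 0" using q by simp
      then show False using H0 unfolding Q_def by simp
    qed
    have "\<not> Q ((LEAST k. Q k) - 1)" by (rule not_less_Least) (use nz in simp)
    then have "P (LEAST k. Q k)" unfolding Pc using q le nz unfolding Q_def by auto
    then show ?thesis by blast
  qed
  have uniq: "k1 = k2" if "P k1" "P k2" for k1 k2
  proof (rule ccontr)
    assume ne: "k1 \<noteq> k2"
    have *: False if "P a" "P b" "a < b" for a b
    proof -
      have "H N (b - 1) \<le> H N a" using that by (intro H_antimono) simp
      then show False using that unfolding Pc by simp
    qed
    show False using ne *[OF that] *[OF that(2,1)] by (cases "k1 < k2") auto
  qed
  have "\<exists>!k. P k" using ex uniq by blast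
  then have "P (THE k. P k)" by (rule theI')
  moreover have "kappa N \<theta> = (THE k. P k)"
  proof -
    have a: "\<not> \<theta> \<le> inverse (H N 0)" using conv2[of 0] N2 H0 by simp
    have b: "\<not> \<theta> > real N - 1" using tN by simp
    show ?thesis unfolding kappa_def P_def using a b by simp
  qed
  ultimately show ?thesis unfolding Pc by simp
qed



lemma H_shift:
  assumes "1 \<le> k" "k \<le> N"
  shows "(\<Sum>m\<in>{k+1..N}. 1 / real (m - 1)) = H N (k - 1)"
proof -
  have "(\<Sum>m\<in>{k+1..N}. 1 / real (m - 1)) = (\<Sum>m\<in>{k+1..(N-1)+1}. 1 / real (m - 1))"
    using assms by simp
  also have "\<dots> = (\<Sum>i\<in>{k..N-1}. 1 / real i)"
    by (subst sum.shift_bounds_cl_nat_ivl) simp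
  finally show ?thesis unfolding H_def using assms by simp
qed

theorem mainTheorem11:
  fixes \<theta> :: real
  assumes "\<theta> > 0"
  shows "(\<lambda>N. real (kappa N \<theta>) / real N) \<longlonglongrightarrow> exp (- 1 / \<theta>) \<and>
    (\<lambda>N. W N (kappa N \<theta>) \<theta> / rising \<theta> N) \<longlonglongrightarrow> exp (- 1)"
proof -
  note th = assms
  define c where "c = exp (- 1 / \<theta>)"
  have c0: "c > 0" unfolding c_def by simp
  have cinv: "c * exp (1 / \<theta>) = 1" unfolding c_def by (simp add: exp_add[symmetric])
  define k where "k N = kappa N \<theta>" for N
  have ev: "eventually (\<lambda>N. 2 \<le> N \<and> 1/\<theta> < H N 0 \<and> \<theta> \<le> real N - 1) sequentially"
  proof -
    define N0 where "N0 = nat \<lceil>exp (1/\<theta>) + \<theta>\<rceil> + 2"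
    have "2 \<le> N \<and> 1/\<theta> < H N 0 \<and> \<theta> \<le> real N - 1" if "N \<ge> N0" for N
    proof -
      have r: "exp (1/\<theta>) + \<theta> \<le> real (nat \<lceil>exp (1/\<theta>) + \<theta>\<rceil>)" by linarith
      then have rN: "exp (1/\<theta>) + \<theta> + 2 \<le> real N" using that unfolding N0_def by linarith
      have N2: "2 \<le> N" using that unfolding N0_def by simp
      have "ln (real (N - 1 + 1)) - ln (real (0 + 1)) \<le> H N 0"
        unfolding H_def using harm_lb[of 0 "N - 1"] by simp
      then have lnH: "ln (real N) \<le> H N 0" using N2 by simp
      have "1/\<theta> = ln (exp (1/\<theta>))" by simp
      also have "\<dots> < ln (real N)" using rN th N2 by (subst ln_less_cancel_iff) auto
      finally have lt: "1/\<theta> < ln (real N)" .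
      have e0: "exp (1/\<theta>) > 0" by simp
      show ?thesis
      proof (intro conjI)
        show "2 \<le> N" by (rule N2)
        show "1/\<theta> < H N 0" using lt lnH by linarith
        show "\<theta> \<le> real N - 1" using rN e0 by linarith
      qed
    qed
    then show ?thesis unfolding eventually_sequentially by blast
  qed
  have props: "eventually (\<lambda>N. 2 \<le> N \<and> 1 \<le> k N \<and> k N \<le> N - 2 \<and> H N (k N) \<le> 1/\<theta> \<and> 1/\<theta> < H N (k N - 1)) sequentially"
    using ev by eventually_elim (use kappa_props[OF th] k_def in auto)
  have lowk: "eventually (\<lambda>N. real N * c \<le> real (k N) + 1) sequentially"
    using props
  proof eventually_elim
    case (elim N)
    let ?k = "k N"
    have kN1: "?k \<le> N - 1" using elim by arith
    have "ln (real (N - 1 + 1)) - ln (real (?k + 1)) \<le> H N ?k"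
      unfolding H_def using harm_lb[OF kN1] by simp
    moreover have "ln (real (N - 1 + 1)) = ln (real N)" "ln (real (?k + 1)) = ln (real ?k + 1)"
      using elim by auto
    ultimately have "ln (real N) \<le> 1/\<theta> + ln (real ?k + 1)" using elim by linarith
    also have "\<dots> = ln (exp (1/\<theta>) * (real ?k + 1))" by (simp add: ln_mult)
    finally have "real N \<le> exp (1/\<theta>) * (real ?k + 1)"
      using elim by (subst (asm) ln_le_cancel_iff) auto
    then have "real N * c \<le> exp (1/\<theta>) * c * (real ?k + 1)" using c0
      by (simp add: mult_right_mono mult.commute mult.left_commute)
    then show ?case using cinv by (simp add: mult.commute)
  qed
  have upk: "eventually (\<lambda>N. real (k N) \<le> real N * c * exp (1 / real (k N))) sequentially"
    using props
  proof eventually_elim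
    case (elim N)
    let ?k = "k N"
    have kN1: "?k \<le> N - 1" "1 \<le> ?k" using elim by arith+
    have "H N ?k \<le> ln (real (N - 1)) - ln (real ?k)"
      unfolding H_def using harm_ub[OF kN1(2) kN1(1)] by simp
    moreover have "H N (?k - 1) = 1 / real ?k + H N ?k" using elim by (intro H_step) auto
    ultimately have "ln (real ?k) < (1 / real ?k - 1/\<theta>) + ln (real (N - 1))" using elim by simp
    also have "\<dots> = ln (exp (1 / real ?k - 1/\<theta>) * real (N - 1))" using elim by (simp add: ln_mult)
    finally have "real ?k < exp (1 / real ?k - 1/\<theta>) * real (N - 1)"
      using elim by (subst (asm) ln_less_cancel_iff) auto
    also have "\<dots> \<le> exp (1 / real ?k - 1/\<theta>) * real N" by (intro mult_left_mono) auto
    also have "exp (1 / real ?k - 1/\<theta>) = c * exp (1 / real ?k)"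
      unfolding c_def by (simp add: exp_add[symmetric])
    finally show ?case by (simp add: mult.commute mult.left_commute)
  qed
  have kinf: "filterlim (\<lambda>N. real (k N)) at_top sequentially"
  proof (rule filterlim_at_top_mono)
    have "filterlim (\<lambda>N. c * real N) at_top sequentially"
      by (rule filterlim_tendsto_pos_mult_at_top[OF tendsto_const c0 filterlim_real_sequentially])
    then show "filterlim (\<lambda>N. (-1) + c * real N) at_top sequentially"
      by (rule filterlim_tendsto_add_at_top[OF tendsto_const])
    show "eventually (\<lambda>N. (-1) + c * real N \<le> real (k N)) sequentially"
      using lowk by eventually_elim (simp add: mult.commute)
  qed
  have inv0: "(\<lambda>N. 1 / real (k N)) \<longlonglongrightarrow> 0"
    using tendsto_inverse_0_at_top[OF kinf] by (simp add: inverse_eq_divide)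
  have part1: "(\<lambda>N. real (k N) / real N) \<longlonglongrightarrow> c"
  proof (rule tendsto_sandwich)
    show "eventually (\<lambda>N. c - 1 / real N \<le> real (k N) / real N) sequentially"
      using lowk props
    proof eventually_elim
      case (elim N)
      then have pos: "real N > 0" by simp
      have "(real N * c - 1) / real N \<le> real (k N) / real N" using elim pos by (intro divide_right_mono) auto
      moreover have "(real N * c - 1) / real N = c - 1 / real N" using pos by (simp add: field_simps)
      ultimately show ?case by simp
    qed
    show "eventually (\<lambda>N. real (k N) / real N \<le> c * exp (1 / real (k N))) sequentially"
      using upk props
    proof eventually_elim
      case (elim N)
      then have pos: "real N > 0" by simp
      have "real (k N) / real N \<le> (real N * c * exp (1 / real (k N))) / real N" using elim pos by (intro divide_right_mono) auto
      moreover have "(real N * c * exp (1 / real (k N))) / real N = c * exp (1 / real (k N))" using pos by (simp add: field_simps)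
      ultimately show ?case by simp
    qed
    show "(\<lambda>N. c - 1 / real N) \<longlonglongrightarrow> c"
      using tendsto_diff[OF tendsto_const lim_const_over_n[of 1]] by simp
    show "(\<lambda>N. c * exp (1 / real (k N))) \<longlonglongrightarrow> c"
      using tendsto_mult[OF tendsto_const[of c] tendsto_exp[OF inv0]] by simp
  qed
  define T where "T N = \<theta> * H N (k N - 1)" for N
  define S where "S N = (\<Sum>j\<in>{k N + 1..N}. ln (1 + \<theta> / real (j - 1)))" for N
  have Req: "eventually (\<lambda>N. T N * exp (- S N) = W N (kappa N \<theta>) \<theta> / rising \<theta> N) sequentially"
    using props
  proof eventually_elim
    case (elim N)
    have "exp (- S N) = (\<Prod>j\<in>{k N + 1..N}. exp (- ln (1 + \<theta> / real (j - 1))))"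
      unfolding S_def by (simp add: exp_sum[symmetric] sum_negf)
    also have "\<dots> = (\<Prod>j\<in>{k N + 1..N}. real (j - 1) / (\<theta> + real (j - 1)))"
    proof (rule prod.cong[OF refl])
      fix j assume j: "j \<in> {k N + 1..N}"
      then have pos: "real (j - 1) > 0" using elim by auto
      then have "1 + \<theta> / real (j - 1) > 0" using th by (simp add: add_pos_nonneg)
      then have "exp (- ln (1 + \<theta> / real (j - 1))) = 1 / (1 + \<theta> / real (j - 1))"
        by (simp add: exp_minus inverse_eq_divide)
      also have "\<dots> = real (j - 1) / (\<theta> + real (j - 1))" using pos by (simp add: field_simps)
      finally show "exp (- ln (1 + \<theta> / real (j - 1))) = real (j - 1) / (\<theta> + real (j - 1))" .
    qed
    finally have ex: "exp (- S N) = (\<Prod>j\<in>{k N + 1..N}. real (j - 1) / (\<theta> + real (j - 1)))" .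
    have k1: "1 \<le> k N" "k N \<le> N" using elim by arith+
    have "W N (k N) \<theta> / pochhammer \<theta> N = T N * exp (- S N)"
      unfolding ex T_def by (rule ratio_formula[OF th k1])
    then show ?case unfolding rising_def k_def by simp
  qed
  have Tb: "eventually (\<lambda>N. 1 \<le> T N \<and> T N \<le> 1 + \<theta> * (1 / real (k N))) sequentially"
    using props
  proof eventually_elim
    case (elim N)
    have "H N (k N - 1) = 1 / real (k N) + H N (k N)" using elim by (intro H_step) auto
    then show ?case unfolding T_def using elim th by (auto simp: field_simps)
  qed
  have Tlim: "T \<longlonglongrightarrow> 1"
  proof (rule tendsto_sandwich)
    show "eventually (\<lambda>N. 1 \<le> T N) sequentially" using Tb by eventually_elim simp
    show "eventually (\<lambda>N. T N \<le> 1 + \<theta> * (1 / real (k N))) sequentially" using Tb by eventually_elim simp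
    show "(\<lambda>N. 1 + \<theta> * (1 / real (k N))) \<longlonglongrightarrow> 1"
      using tendsto_add[OF tendsto_const[of 1] tendsto_mult[OF tendsto_const[of \<theta>] inv0]] by simp
  qed simp
  have kth: "eventually (\<lambda>N. \<theta> \<le> real (k N)) sequentially"
    using kinf unfolding filterlim_at_top by blast
  have Sb: "eventually (\<lambda>N. T N * (1 - \<theta> * (1 / real (k N))) \<le> S N \<and> S N \<le> T N) sequentially"
    using props kth
  proof eventually_elim
    case (elim N)
    have kpos: "real (k N) > 0" using elim by simp
    have Tsum: "T N = (\<Sum>j\<in>{k N + 1..N}. \<theta> / real (j - 1))"
    proof -
      have k1: "1 \<le> k N" "k N \<le> N" using elim by arith+
      have "T N = \<theta> * (\<Sum>j\<in>{k N + 1..N}. 1 / real (j - 1))"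
        unfolding T_def H_shift[OF k1] ..
      then show ?thesis by (simp add: sum_distrib_left)
    qed
    have up: "S N \<le> T N"
      unfolding Tsum S_def by (rule sum_mono) (use th in \<open>auto intro: ln_add_one_self_le_self\<close>)
    have lo: "T N * (1 - \<theta> * (1 / real (k N))) \<le> S N"
      unfolding Tsum S_def sum_distrib_right
    proof (rule sum_mono)
      fix j assume j: "j \<in> {k N + 1..N}"
      define x where "x = \<theta> / real (j - 1)"
      have jk: "real (k N) \<le> real (j - 1)" using j by auto
      have x0: "0 \<le> x" unfolding x_def using th by simp
      have xle: "x \<le> \<theta> * (1 / real (k N))" unfolding x_def using th kpos jk
        by (simp add: frac_le)
      also have "\<dots> \<le> 1" using elim kpos by (simp add: field_simps)
      finally have x1: "x \<le> 1" .
      have "x * (1 - \<theta> * (1 / real (k N))) \<le> x * (1 - x)"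
        using xle x0 by (intro mult_left_mono) auto
      also have "\<dots> = x - x\<^sup>2" by (simp add: power2_eq_square algebra_simps)
      also have "\<dots> \<le> ln (1 + x)" by (rule ln_one_plus_pos_lower_bound[OF x0 x1])
      finally show "\<theta> / real (j - 1) * (1 - \<theta> * (1 / real (k N))) \<le> ln (1 + \<theta> / real (j - 1))"
        unfolding x_def .
    qed
    show ?case using up lo by simp
  qed
  have Slim: "S \<longlonglongrightarrow> 1"
  proof (rule tendsto_sandwich)
    show "eventually (\<lambda>N. T N * (1 - \<theta> * (1 / real (k N))) \<le> S N) sequentially" using Sb by eventually_elim simp
    show "eventually (\<lambda>N. S N \<le> T N) sequentially" using Sb by eventually_elim simp
    show "(\<lambda>N. T N * (1 - \<theta> * (1 / real (k N)))) \<longlonglongrightarrow> 1"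
      using tendsto_mult[OF Tlim tendsto_diff[OF tendsto_const[of 1] tendsto_mult[OF tendsto_const[of \<theta>] inv0]]] by simp
    show "T \<longlonglongrightarrow> 1" by (rule Tlim)
  qed
  have "(\<lambda>N. T N * exp (- S N)) \<longlonglongrightarrow> 1 * exp (- 1)"
    by (intro tendsto_mult Tlim tendsto_exp tendsto_minus Slim)
  then have part2: "(\<lambda>N. W N (kappa N \<theta>) \<theta> / rising \<theta> N) \<longlonglongrightarrow> exp (- 1)"
    using Lim_transform_eventually[OF _ Req] by simp
  show ?thesis using part1 part2 unfolding k_def c_def by simp
qed

end
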